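(* Let $n \ge 1$ and let $x, y$ be valid Fibonacci representations of the same length. (i) If $D(x,y) \le -n-1$, then $D(x',y') \le -n-1$ for all valid right extensions $x'$ of $x$ and $y'$ of $y$ with $|x'| = |y'|$. (ii) If $D(x,y) \ge 2n$, then $D(x',y') \ge n$ for all valid right extensions $x'$ of $x$ and $y'$ of $y$ with $|x'|=|y'|$. Consequently, for $0 \le c < n$, if $D(x,y) \notin [-n, 2n-1]$ then no pair of such right extensions satisfies $[y'] = n[x'] + c$.
   Context: For a binary word $x = x_1\cdots x_\ell$, $[x] = \sum_{j=1}^{\ell} x_j F_{\ell-j+2}$ where $F_0=0,F_1=1,F_k=F_{k-1}+F_{k-2}$. A valid Fibonacci representation is a binary word with no factor $11$ (leading zeros allowed). A word $z$ is a valid right extension of $x$ if $x$ is a prefix of $z$ and $z$ contains no $11$. For words $u,v$, $D(u,v) = [v] - n[u]$. *)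

theory Defs
  imports Main "HOL-Number_Theory.Fib"
begin

text \<open>Binary words are lists of booleans (True = 1). The value of
x = x_1 ... x_l is the sum over j = 1..l of x_j * F(l - j + 2).\<close>

definition fibval :: "bool list \<Rightarrow> int" where
  "fibval x = (\<Sum>j = 1..length x. (if x ! (j - 1) then int (fib (length x - j + 2)) else 0))"

text \<open>Valid Fibonacci representation: no factor 11 (leading zeros allowed).\<close>
definition valid_fib :: "bool list \<Rightarrow> bool" where
  "valid_fib x \<longleftrightarrow> (\<forall>i. Suc i < length x \<longrightarrow> \<not> (x ! i \<and> x ! Suc i))"

definition valid_rext :: "bool list \<Rightarrow> bool list \<Rightarrow> bool" where
  "valid_rext z x \<longleftrightarrow> (\<exists>w. z = x @ w) \<and> valid_fib z"

definition Dval :: "nat \<Rightarrow> bool list \<Rightarrow> bool list \<Rightarrow> int" where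
  "Dval n u v = fibval v - int n * fibval u"

end

theory Submission imports Defs begin

fun g :: "nat \<Rightarrow> bool list \<Rightarrow> int" where
  "g d [] = 0"
| "g d (a # x) = (if a then int (fib (length x + d)) else 0) + g d x"

lemma g_sum: "(\<Sum>i<length x. if x!i then int (fib (length x - Suc i + d)) else 0) = g d x"
proof (induction x)
  case Nil then show ?case by simp
next
  case (Cons a x)
  have "(\<Sum>i<length (a#x). if (a#x)!i then int (fib (length (a#x) - Suc i + d)) else 0)
     = (if a then int (fib (length x + d)) else 0) + (\<Sum>i<length x. if x!i then int (fib (length x - Suc i + d)) else 0)"
    unfolding length_Cons sum.lessThan_Suc_shift by (simp, intro sum.cong) auto
  then show ?case using Cons by simp
qed

lemma fibval_g: "fibval x = g 2 x"
proof -
  have "fibval x = (\<Sum>i<length x. if x!i then int (fib (length x - Suc i + 2)) else 0)"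
    unfolding fibval_def One_nat_def sum.atLeast1_atMost_eq
    by (intro sum.cong) auto
  then show ?thesis using g_sum by simp
qed

lemma g_append: "g d (x @ w) = g (d + length w) x + g d w"
  by (induction x) (auto simp: ac_simps)

lemma g_shift: "g (k + 2) x = int (fib (Suc k)) * g 2 x + int (fib k) * g 1 x"
proof (induction x)
  case Nil then show ?case by simp
next
  case (Cons a x)
  have "fib (length x + (k + 2)) = fib (Suc k) * fib (length x + 2) + fib k * fib (length x + 1)"
    using fib_add[of "length x + 1" k] by (simp add: ac_simps)
  then show ?case using Cons by (simp add: algebra_simps of_nat_mult[symmetric] del: of_nat_mult)
qed

lemma g_snoc2: "g 2 (x @ [a]) = g 2 x + g 1 x + (if a then 1 else 0)"
proof -
  have "g (Suc (Suc d)) x = g (Suc d) x + g d x" for d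
    by (induction x) auto
  from this[of 1] show ?thesis by (simp add: g_append eval_nat_numeral)
qed

lemma g_snoc1: "g 1 (x @ [a]) = g 2 x + (if a then 1 else 0)"
  by (simp add: g_append eval_nat_numeral)

lemma g_nonneg: "g d x \<ge> 0"
  by (induction x) auto

lemma g_F: "g 2 (False # x) = g 2 x" by simp

lemma valid_tl: "valid_fib (a # x) \<Longrightarrow> valid_fib x"
  unfolding valid_fib_def by (metis Suc_less_eq length_Cons nth_Cons_Suc)

lemma g_bound: "valid_fib x \<Longrightarrow> g 2 x < int (fib (length x + 2))"
proof (induction "length x" arbitrary: x rule: less_induct)
  case less
  show ?case
  proof (cases x)
    case Nil then show ?thesis by simp
  next
    case (Cons a x1)
    have v1: "valid_fib x1" using less.prems Cons valid_tl by blast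
    have ih1: "g 2 x1 < int (fib (length x1 + 2))" using less.hyps[of x1] Cons v1 by simp
    show ?thesis
    proof (cases a)
      case False then show ?thesis using Cons ih1 fib_mono[of "length x1 + 2" "length x1 + 3"]
        by simp
    next
      case True
      show ?thesis
      proof (cases x1)
        case Nil then show ?thesis using Cons True by simp
      next
        case (Cons b x2)
        have "\<not> b" using less.prems \<open>x = a # x1\<close> Cons True unfolding valid_fib_def
          by (metis length_Cons nth_Cons_0 nth_Cons_Suc zero_less_Suc Suc_less_eq)
        have v2: "valid_fib x2" using v1 Cons valid_tl by blast
        have ih2: "g 2 x2 < int (fib (length x2 + 2))" using less.hyps[of x2] \<open>x = a # x1\<close> Cons v2 by simp
        show ?thesis using \<open>x = a # x1\<close> Cons True \<open>\<not> b\<close> ih2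
          by (simp add: numeral_eq_Suc)
      qed
    qed
  qed
qed


definition phi :: real where "phi = (1 + sqrt 5) / 2"

lemma phi_sq: "phi * phi = phi + 1"
  unfolding phi_def by (simp add: field_simps algebra_simps)

lemma phi_bounds: "1.6 < phi" "phi < 1.62"
proof -
  have a: "sqrt 5 > 2.2" by (rule real_less_rsqrt) (simp add: power2_eq_square)
  have b: "sqrt 5 < 2.24" by (rule real_less_lsqrt) (simp_all add: power2_eq_square)
  show "1.6 < phi" "phi < 1.62" using a b unfolding phi_def by auto
qed

definition e :: "bool list \<Rightarrow> real" where
  "e x = real_of_int (g 2 x) - phi * real_of_int (g 1 x)"

lemma e_snoc: "e (x @ [a]) = (1 - phi) * (e x + (if a then 1 else 0))"
proof -
  have h: "phi * (phi * t) = t + phi * t" for t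
  proof -
    have "phi * (phi * t) = (phi * phi) * t" by (simp only: mult.assoc)
    then show ?thesis by (simp add: phi_sq distrib_right)
  qed
  have "e (x @ [a]) = real_of_int (g 2 x) + real_of_int (g 1 x) + (if a then 1 else 0)
        - phi * (real_of_int (g 2 x) + (if a then 1 else 0))"
    unfolding e_def g_snoc2 g_snoc1 by simp
  also have "\<dots> = (1 - phi) * (e x + (if a then 1 else 0))"
    unfolding e_def by (simp add: algebra_simps h)
  finally show ?thesis .
qed

lemma valid_butlast: "valid_fib (x @ [a]) \<Longrightarrow> valid_fib x"
  unfolding valid_fib_def by (metis Suc_lessD length_append_singleton less_SucI nth_append_left)

lemma valid_last: "valid_fib (x @ [True]) \<Longrightarrow> x \<noteq> [] \<Longrightarrow> \<not> last x"
proof -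
  assume v: "valid_fib (x @ [True])" and ne: "x \<noteq> []"
  then obtain m where m: "length x = Suc m" by (cases x) auto
  have "\<not> ((x @ [True]) ! m \<and> (x @ [True]) ! Suc m)" using v m unfolding valid_fib_def by simp
  moreover have "(x @ [True]) ! m = last x" using m ne by (simp add: nth_append last_conv_nth)
  moreover have "(x @ [True]) ! Suc m = True" using m by (simp add: nth_append)
  ultimately show ?thesis by simp
qed

lemma valid_append_right: "valid_fib (x @ w) \<Longrightarrow> valid_fib w"
  by (induction x) (auto dest: valid_tl)

lemma step_false:
  assumes "-1 < t" "t < phi - 1"
  shows "-1 < (1 - phi) * t" "(1 - phi) * t < phi - 1" "phi - 2 < (1 - phi) * t"
proof -
  have p: "1.6 < phi" "phi < 1.62" by (rule phi_bounds)+
  have "(1 - phi) * t < (1 - phi) * (-1)"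
    by (rule mult_strict_left_mono_neg) (use assms p in auto)
  then show "(1 - phi) * t < phi - 1" by simp
  have "(1 - phi) * (phi - 1) < (1 - phi) * t"
    by (rule mult_strict_left_mono_neg) (use assms p in auto)
  then show "phi - 2 < (1 - phi) * t" using phi_sq by (simp add: algebra_simps)
  then show "-1 < (1 - phi) * t" using p by simp
qed

lemma step_true:
  assumes "phi - 2 < t" "t < phi - 1"
  shows "-1 < (1 - phi) * (t + 1)" "(1 - phi) * (t + 1) < phi - 1"
proof -
  have p: "1.6 < phi" "phi < 1.62" by (rule phi_bounds)+
  have "(1 - phi) * phi < (1 - phi) * (t + 1)"
    by (rule mult_strict_left_mono_neg) (use assms p in auto)
  then show "-1 < (1 - phi) * (t + 1)" using phi_sq by (simp add: algebra_simps)
  have "(1 - phi) * (t + 1) < (1 - phi) * (phi - 1)"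
    by (rule mult_strict_left_mono_neg) (use assms p in auto)
  then show "(1 - phi) * (t + 1) < phi - 1" using phi_sq p by (simp add: algebra_simps)
qed

lemma e_bounds: "valid_fib x \<Longrightarrow> -1 < e x \<and> e x < phi - 1 \<and> ((x = [] \<or> \<not> last x) \<longrightarrow> phi - 2 < e x)"
proof (induction x rule: rev_induct)
  case Nil
  have p: "1.6 < phi" "phi < 1.62" by (rule phi_bounds)+
  then show ?case by (simp add: e_def)
next
  case (snoc a x)
  have v: "valid_fib x" using snoc.prems valid_butlast by blast
  have ih: "-1 < e x" "e x < phi - 1" "(x = [] \<or> \<not> last x) \<longrightarrow> phi - 2 < e x"
    using snoc.IH v by auto
  show ?case
  proof (cases a)
    case False
    then show ?thesis using step_false[OF ih(1,2)] by (simp add: e_snoc)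
  next
    case True
    have "valid_fib (x @ [True])" using snoc.prems True by simp
    then have "x = [] \<or> \<not> last x" using valid_last by blast
    then have "phi - 2 < e x" using ih by blast
    then show ?thesis using step_true[OF _ ih(2)] True by (simp add: e_snoc)
  qed
qed

lemma keyE:
  fixes n :: nat
  assumes n: "n \<ge> 1" and vx: "valid_fib x" and vy: "valid_fib y"
  shows "g 2 y - int n * g 2 x \<le> - int n - 1 \<Longrightarrow> g 1 y - int n * g 1 x \<le> -1"
    and "g 2 y - int n * g 2 x \<ge> 2 * int n \<Longrightarrow> g 1 y - int n * g 1 x \<ge> 1"
proof -
  have p: "1.6 < phi" "phi < 1.62" by (rule phi_bounds)+
  define D where "D = g 2 y - int n * g 2 x"
  define E where "E = g 1 y - int n * g 1 x"
  have rel: "phi * real_of_int E = real_of_int D - e y + real n * e x"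
    unfolding D_def E_def e_def by (simp add: algebra_simps)
  have ex: "-1 < e x" "e x < phi - 1" and ey: "-1 < e y" "e y < phi - 1"
    using e_bounds[OF vx] e_bounds[OF vy] by auto
  have rn: "real n \<ge> 1" using n by simp
  {
    assume "g 2 y - int n * g 2 x \<le> - int n - 1"
    then have d: "real_of_int D \<le> - real n - 1" unfolding D_def by linarith
    have "real n * e x \<le> real n * (phi - 1)" using ex rn by (intro mult_left_mono) auto
    moreover have "real n * (phi - 1) < real n * 1" using rn p by (intro mult_strict_left_mono) auto
    ultimately have "phi * real_of_int E < 0" using rel d ey p rn by linarith
    then have "real_of_int E < 0" using p by (simp add: mult_less_0_iff)
    then show "g 1 y - int n * g 1 x \<le> -1" unfolding E_def by linarith
  }
  {
    assume "g 2 y - int n * g 2 x \<ge> 2 * int n"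
    then have d: "real_of_int D \<ge> 2 * real n" unfolding D_def by linarith
    have "real n * e x \<ge> real n * (-1)" using ex rn by (intro mult_left_mono) auto
    then have "real n * e x \<ge> - real n" by simp
    moreover have "phi < 2" using p by simp
    ultimately have "phi * real_of_int E > 0" using rel d ey rn by linarith
    then have "real_of_int E > 0" using p by (simp add: zero_less_mult_iff)
    then show "g 1 y - int n * g 1 x \<ge> 1" unfolding E_def by linarith
  }
qed

lemma extD:
  fixes n :: nat
  assumes "length w = length v"
  shows "fibval (y @ v) - int n * fibval (x @ w) =
     int (fib (Suc (length w))) * (g 2 y - int n * g 2 x) + int (fib (length w)) * (g 1 y - int n * g 1 x)
     + g 2 v - int n * g 2 w"
proof -
  have "fibval (x @ w) = int (fib (Suc (length w))) * g 2 x + int (fib (length w)) * g 1 x + g 2 w"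
    unfolding fibval_g g_append using g_shift[of "length w" x] by (simp add: add.commute)
  moreover have "fibval (y @ v) = int (fib (Suc (length w))) * g 2 y + int (fib (length w)) * g 1 y + g 2 v"
    unfolding fibval_g g_append using g_shift[of "length w" y] assms by (simp add: add.commute)
  ultimately show ?thesis by (simp add: algebra_simps)
qed

lemma main_ext:
  fixes n :: nat
  assumes n: "n \<ge> 1" and vx: "valid_fib x" and vy: "valid_fib y" and len: "length x = length y"
    and ex': "valid_rext x' x" and ey': "valid_rext y' y" and l': "length x' = length y'"
  shows "Dval n x y \<le> - int n - 1 \<Longrightarrow> Dval n x' y' \<le> - int n - 1"
    and "Dval n x y \<ge> 2 * int n \<Longrightarrow> Dval n x' y' \<ge> int n"
proof -
  obtain w where w: "x' = x @ w" "valid_fib (x @ w)" using ex' unfolding valid_rext_def by blast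
  obtain v where v: "y' = y @ v" "valid_fib (y @ v)" using ey' unfolding valid_rext_def by blast
  have lw: "length w = length v" using len l' w v by simp
  have vw: "valid_fib w" and vv: "valid_fib v" using w v valid_append_right by blast+
  define k where "k = length w"
  define A where "A = int (fib (Suc k))"
  define B where "B = int (fib k)"
  define D where "D = g 2 y - int n * g 2 x"
  define E where "E = g 1 y - int n * g 1 x"
  have DD: "Dval n x y = D" unfolding Dval_def D_def fibval_g by simp
  have DD': "Dval n x' y' = A * D + B * E + g 2 v - int n * g 2 w"
    unfolding Dval_def w v extD[OF lw] A_def B_def D_def E_def k_def by simp
  have A1: "A \<ge> 1" unfolding A_def using fib_neq_0_nat[of "Suc k"] by linarith
  have AB: "A \<ge> B" unfolding A_def B_def using fib_Suc_mono[of k] by simp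
  have B0: "B \<ge> 0" unfolding B_def by simp
  have bv: "g 2 v \<le> A + B - 1" using g_bound[OF vv] lw unfolding A_def B_def k_def
    by (simp add: numeral_eq_Suc)
  have bw: "g 2 w \<le> A + B - 1" using g_bound[OF vw] unfolding A_def B_def k_def
    by (simp add: numeral_eq_Suc)
  have gv: "g 2 v \<ge> 0" "g 2 w \<ge> 0" by (rule g_nonneg)+
  {
    assume "Dval n x y \<le> - int n - 1"
    then have d: "D \<le> - int n - 1" using DD by simp
    have e1: "E \<le> -1" using keyE(1)[OF n vx vy] d unfolding D_def E_def by blast
    have "A * D \<le> A * (- int n - 1)" using d A1 by (intro mult_left_mono) auto
    moreover have "B * E \<le> B * (-1)" using e1 B0 by (intro mult_left_mono) auto
    moreover have "int n * g 2 w \<ge> 0" using gv by simp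
    moreover have "A * int n \<ge> int n" using A1 by (simp add: mult_le_cancel_right1)
    ultimately show "Dval n x' y' \<le> - int n - 1" using DD' bv by (simp add: algebra_simps)
  }
  {
    assume "Dval n x y \<ge> 2 * int n"
    then have d: "D \<ge> 2 * int n" using DD by simp
    have e1: "E \<ge> 1" using keyE(2)[OF n vx vy] d unfolding D_def E_def by blast
    have "A * D \<ge> A * (2 * int n)" using d A1 by (intro mult_left_mono) auto
    moreover have "B * E \<ge> 0" using e1 B0 by simp
    moreover have "int n * g 2 w \<le> int n * (A + B - 1)" using bw by (intro mult_left_mono) auto
    moreover have "A * int n \<ge> B * int n" using AB by (intro mult_right_mono) auto
    ultimately show "Dval n x' y' \<ge> int n" using DD' gv by (simp add: algebra_simps)
  }
qed

theorem theorem11: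
  fixes n :: nat and x y :: "bool list"
  assumes "n \<ge> 1" and "valid_fib x" and "valid_fib y" and "length x = length y"
  shows "(Dval n x y \<le> - int n - 1 \<longrightarrow>
           (\<forall>x' y'. valid_rext x' x \<and> valid_rext y' y \<and> length x' = length y'
              \<longrightarrow> Dval n x' y' \<le> - int n - 1))
       \<and> (Dval n x y \<ge> 2 * int n \<longrightarrow>
           (\<forall>x' y'. valid_rext x' x \<and> valid_rext y' y \<and> length x' = length y'
              \<longrightarrow> Dval n x' y' \<ge> int n))
       \<and> (\<forall>c::nat. c < n \<longrightarrow> Dval n x y \<notin> {- int n .. 2 * int n - 1} \<longrightarrow>
           \<not> (\<exists>x' y'. valid_rext x' x \<and> valid_rext y' y \<and> length x' = length y'
              \<and> fibval y' = int n * fibval x' + int c))"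
proof (intro conjI allI impI notI)
  fix x' y' assume "Dval n x y \<le> - int n - 1"
    "valid_rext x' x \<and> valid_rext y' y \<and> length x' = length y'"
  then show "Dval n x' y' \<le> - int n - 1" using main_ext(1)[OF assms] by blast
next
  fix x' y' assume "Dval n x y \<ge> 2 * int n"
    "valid_rext x' x \<and> valid_rext y' y \<and> length x' = length y'"
  then show "Dval n x' y' \<ge> int n" using main_ext(2)[OF assms] by blast
next
  fix c :: nat
  assume c: "c < n" and nd: "Dval n x y \<notin> {- int n .. 2 * int n - 1}"
    and "\<exists>x' y'. valid_rext x' x \<and> valid_rext y' y \<and> length x' = length y'
              \<and> fibval y' = int n * fibval x' + int c"
  then obtain x' y' where h: "valid_rext x' x" "valid_rext y' y" "length x' = length y'"
    "fibval y' = int n * fibval x' + int c" by blast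
  have dc: "Dval n x' y' = int c" using h(4) unfolding Dval_def by simp
  have "Dval n x y \<le> - int n - 1 \<or> Dval n x y \<ge> 2 * int n" using nd by auto
  then show False
  proof
    assume "Dval n x y \<le> - int n - 1"
    then have "Dval n x' y' \<le> - int n - 1" using main_ext(1)[OF assms h(1-3)] by blast
    then show False using dc by simp
  next
    assume "Dval n x y \<ge> 2 * int n"
    then have "Dval n x' y' \<ge> int n" using main_ext(2)[OF assms h(1-3)] by blast
    then show False using dc c by simp
  qed
qed

end
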